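(* Let $f:\mathbb{R}^n\to\mathbb{R}\cup\{+\infty\}$ be a polyhedral M-convex function with bounded $\operatorname{dom}_{\mathbb{R}} f$, and $y\in\operatorname{dom}_{\mathbb{R}} f$ with $\phi_{\mathbb{R}}(y)<0$. Let $i\in N$ satisfy $f'_{\mathbb{R}}(y;i,j)>\phi_{\mathbb{R}}(y)$ for all $j\in N\setminus\{i\}$, let $h,k\in N$ be distinct with $f'_{\mathbb{R}}(y;h,k)=\phi_{\mathbb{R}}(y)$, and let $0<\lambda\le\bar c_{\mathbb{R}}(y;h,k)$. Then $\hat y:=y+\lambda(\chi_h-\chi_k)$ satisfies $f'_{\mathbb{R}}(\hat y;i,j)>\phi_{\mathbb{R}}(y)$ for every $j\in N\setminus\{i\}$.
   Context: $N=\{1,\dots,n\}$; $\chi_i$ is the $i$-th unit vector. $\operatorname{dom}_{\mathbb{R}} f=\{x\in\mathbb{R}^n:f(x)<+\infty\}$. A polyhedral convex function $f:\mathbb{R}^n\to\mathbb{R}\cup\{+\infty\}$ (epigraph a polyhedron, $\operatorname{dom}_{\mathbb{R}} f\neq\emptyset$) is M-convex if for all $x,y\in\operatorname{dom}_{\mathbb{R}} f$ and every $i$ with $x(i)>y(i)$ there exist $j$ with $x(j)<y(j)$ and $\epsilon_0>0$ such that $f(x)+f(y)\ge f(x-\epsilon(\chi_i-\chi_j))+f(y+\epsilon(\chi_i-\chi_j))$ for all $\epsilon\in[0,\epsilon_0]$. For $x\in\operatorname{dom}_{\mathbb{R}} f$, $f'_{\mathbb{R}}(x;i,j)=\lim_{\alpha\downarrow0}(f(x+\alpha(\chi_i-\chi_j))-f(x))/\alpha$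 (possibly $+\infty$), $\phi_{\mathbb{R}}(x)=\min_{i,j\in N}f'_{\mathbb{R}}(x;i,j)$, and for finite $f'_{\mathbb{R}}(x;i,j)$, $\bar c_{\mathbb{R}}(x;i,j)=\max\{\lambda\ge0: f(x+\lambda(\chi_i-\chi_j))-f(x)=\lambda f'_{\mathbb{R}}(x;i,j)\}$. *)

theory Defs
  imports "HOL-Analysis.Analysis" "HOL-Library.Extended_Real"
begin

text \<open>Functions R^n -> R \<union> {+\<infinity>} are modelled as f :: real^'n \<Rightarrow> ereal never taking -\<infinity>;
  the ground set N is the finite index type 'n.\<close>

definition unitv :: "'n::finite \<Rightarrow> real^'n" where
  "unitv i = axis i 1"

definition domR :: "(real^'n::finite \<Rightarrow> ereal) \<Rightarrow> (real^'n) set" where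
  "domR f = {x. f x < \<infinity>}"

definition epigraph :: "(real^'n::finite \<Rightarrow> ereal) \<Rightarrow> ((real^'n) \<times> real) set" where
  "epigraph f = {(x, t). f x \<le> ereal t}"

definition polyhedral_convex :: "(real^'n::finite \<Rightarrow> ereal) \<Rightarrow> bool" where
  "polyhedral_convex f \<longleftrightarrow> (\<forall>x. f x \<noteq> -\<infinity>) \<and> polyhedron (epigraph f) \<and> domR f \<noteq> {}"

definition M_convex :: "(real^'n::finite \<Rightarrow> ereal) \<Rightarrow> bool" where
  "M_convex f \<longleftrightarrow> polyhedral_convex f \<and>
     (\<forall>x\<in>domR f. \<forall>y\<in>domR f. \<forall>i. x$i > y$i \<longrightarrow>
        (\<exists>j. x$j < y$j \<and> (\<exists>\<epsilon>0>0. \<forall>\<epsilon>\<in>{0..\<epsilon>0}.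
           f x + f y \<ge> f (x - \<epsilon> *\<^sub>R (unitv i - unitv j)) + f (y + \<epsilon> *\<^sub>R (unitv i - unitv j)))))"

definition dderiv :: "(real^'n::finite \<Rightarrow> ereal) \<Rightarrow> real^'n \<Rightarrow> 'n \<Rightarrow> 'n \<Rightarrow> ereal" where
  "dderiv f x i j = Lim (at_right 0)
     (\<lambda>\<alpha>::real. (f (x + \<alpha> *\<^sub>R (unitv i - unitv j)) - f x) / ereal \<alpha>)"

definition phiR :: "(real^'n::finite \<Rightarrow> ereal) \<Rightarrow> real^'n \<Rightarrow> ereal" where
  "phiR f x = Min {dderiv f x i j | i j. True}"

definition cbarR :: "(real^'n::finite \<Rightarrow> ereal) \<Rightarrow> real^'n \<Rightarrow> 'n \<Rightarrow> 'n \<Rightarrow> real" where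
  "cbarR f x i j = (GREATEST c::real. c \<ge> 0 \<and>
     f (x + c *\<^sub>R (unitv i - unitv j)) - f x = ereal c * dderiv f x i j)"

end

theory Submission
  imports Defs
begin


lemma ereal_all_le_minf: "(\<And>t. (e::ereal) \<le> ereal t) \<Longrightarrow> e = -\<infinity>"
  by (cases e) (auto, metis ereal_less_eq(3) lt_ex not_le)


lemma rep:
  fixes f :: "real^'n::finite \<Rightarrow> ereal"
  assumes pc: "polyhedral_convex f"
  shows "\<exists>(J::(((real^'n) \<times> real) set) set) u v (K::(((real^'n) \<times> real) set) set) a b.
     finite J \<and> J \<noteq> {} \<and> finite K \<and>
     (\<forall>x. f x = (if (\<forall>l\<in>K. a l \<bullet> x \<le> b l) then ereal (Max ((\<lambda>l. u l \<bullet> x + v l) ` J)) else \<infinity>))"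
proof -
  from pc have ninf: "\<And>x. f x \<noteq> -\<infinity>" and poly: "polyhedron (epigraph f)" and ne: "domR f \<noteq> {}"
    unfolding polyhedral_convex_def by auto
  from poly obtain F where fin: "finite F" and epi: "epigraph f = \<Inter>F"
    and hs: "\<forall>h\<in>F. \<exists>a b. a \<noteq> 0 \<and> h = {x. a \<bullet> x \<le> b}"
    unfolding polyhedron_def by auto
  from hs obtain A B where AB: "\<forall>h\<in>F. h = {x. A h \<bullet> x \<le> B h}" by metis
  define AA where "AA h = fst (A h)" for h
  define AB where "AB h = snd (A h)" for h
  have mem: "f x \<le> ereal t \<longleftrightarrow> (\<forall>h\<in>F. AA h \<bullet> x + AB h * t \<le> B h)" for x t
  proof -
    have "f x \<le> ereal t \<longleftrightarrow> (x,t) \<in> epigraph f" unfolding epigraph_def by auto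
    also have "\<dots> \<longleftrightarrow> (\<forall>h\<in>F. (x,t) \<in> h)" using epi by auto
    also have "\<dots> \<longleftrightarrow> (\<forall>h\<in>F. AA h \<bullet> x + AB h * t \<le> B h)"
    proof -
      have "A h \<bullet> (x,t) = AA h \<bullet> x + AB h * t" for h
        unfolding AA_def AB_def by (cases "A h") auto
      moreover have "(x,t) \<in> h \<longleftrightarrow> A h \<bullet> (x,t) \<le> B h" if "h \<in> F" for h
        using AB that by (metis (no_types, lifting) mem_Collect_eq)
      ultimately show ?thesis by auto
    qed
    finally show ?thesis .
  qed
  from ne obtain x0 where "f x0 < \<infinity>" unfolding domR_def by auto
  with ninf obtain t0 where t0: "f x0 = ereal t0" by (cases "f x0") auto
  have ABle: "AB h \<le> 0" if "h \<in> F" for h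
  proof (rule ccontr)
    assume "\<not> AB h \<le> 0"
    define t where "t = max t0 ((B h - AA h \<bullet> x0) / AB h + 1)"
    have "f x0 \<le> ereal t" using t0 by (simp add: t_def)
    then have "AA h \<bullet> x0 + AB h * t \<le> B h" using mem that by auto
    moreover have "AB h * t \<ge> AB h * ((B h - AA h \<bullet> x0) / AB h + 1)"
      using \<open>\<not> AB h \<le> 0\<close> by (intro mult_left_mono) (auto simp: t_def)
    moreover have "AB h * ((B h - AA h \<bullet> x0) / AB h + 1) = B h - AA h \<bullet> x0 + AB h"
      using \<open>\<not> AB h \<le> 0\<close> by (simp add: field_simps)
    ultimately show False using \<open>\<not> AB h \<le> 0\<close> by linarith
  qed
  define J where "J = {h\<in>F. AB h < 0}"
  define K where "K = {h\<in>F. AB h = 0}"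
  define u where "u h = (1 / (- AB h)) *\<^sub>R AA h" for h
  define v where "v h = B h / AB h" for h
  have FJK: "F = J \<union> K" using ABle unfolding J_def K_def by force
  have Jc: "AA h \<bullet> x + AB h * t \<le> B h \<longleftrightarrow> u h \<bullet> x + v h \<le> t" if "h \<in> J" for h x t
  proof -
    have neg: "AB h < 0" using that J_def by auto
    have "AA h \<bullet> x + AB h * t \<le> B h \<longleftrightarrow> (B h - AA h \<bullet> x) / AB h \<le> t"
      using neg by (simp add: divide_le_eq algebra_simps)
    moreover have "u h \<bullet> x + v h = (B h - AA h \<bullet> x) / AB h"
      using neg unfolding u_def v_def by (simp add: field_simps)
    ultimately show ?thesis by simp
  qed
  have Kc: "AA h \<bullet> x + AB h * t \<le> B h \<longleftrightarrow> AA h \<bullet> x \<le> B h" if "h \<in> K" for h x t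
    using that K_def by auto
  have mem2: "f x \<le> ereal t \<longleftrightarrow> (\<forall>h\<in>K. AA h \<bullet> x \<le> B h) \<and> (\<forall>h\<in>J. u h \<bullet> x + v h \<le> t)" for x t
    unfolding mem FJK using Jc Kc by blast
  have finJ: "finite J" "finite K" using fin FJK by auto
  have Jne: "J \<noteq> {}"
  proof
    assume "J = {}"
    then have "f x0 \<le> ereal t" for t using mem2[of x0 t] mem2[of x0 t0] t0 by auto
    then have "f x0 = -\<infinity>" by (rule ereal_all_le_minf)
    then show False using ninf by auto
  qed
  have feq: "f x = (if (\<forall>l\<in>K. AA l \<bullet> x \<le> B l) then ereal (Max ((\<lambda>l. u l \<bullet> x + v l) ` J)) else \<infinity>)" for x
  proof (cases "\<forall>l\<in>K. AA l \<bullet> x \<le> B l")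
    case True
    define M where "M = Max ((\<lambda>l. u l \<bullet> x + v l) ` J)"
    have le: "f x \<le> ereal t \<longleftrightarrow> M \<le> t" for t
      unfolding mem2 M_def using True finJ Jne by (auto simp: Max_le_iff)
    have "f x = ereal M"
    proof (cases "f x")
      case (real r)
      then show ?thesis using le[of r] le[of M] by auto
    next
      case PInf
      then show ?thesis using le[of M] by auto
    next
      case MInf
      then show ?thesis using ninf by auto
    qed
    then show ?thesis using True M_def by simp
  next
    case False
    then have nle: "\<not> f x \<le> ereal t" for t using mem2 by auto
    have "f x = \<infinity>"
    proof (cases "f x")
      case (real r) then show ?thesis using nle[of r] by auto
    next
      case MInf then show ?thesis using ninf by auto
    qed auto
    then show ?thesis using False by simp
  qed
  have "finite J \<and> J \<noteq> {} \<and> finite K \<and> (\<forall>x. f x = (if (\<forall>l\<in>K. AA l \<bullet> x \<le> B l) then ereal (Max ((\<lambda>l. u l \<bullet> x + v l) ` J)) else \<infinity>))" using finJ Jne feq by simp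
  then show ?thesis by blast
qed




lemma Max_affine:
  fixes h :: "'a \<Rightarrow> real"
  assumes "finite A" "A \<noteq> {}" "0 \<le> t"
  shows "Max ((\<lambda>l. c + t * h l) ` A) = c + t * Max (h ` A)"
proof -
  have "Max (h ` A) \<in> h ` A" using assms by (intro Max_in) auto
  then obtain l0 where l0: "l0 \<in> A" "h l0 = Max (h ` A)" by auto
  show ?thesis
  proof (rule Max_eqI)
    show "finite ((\<lambda>l. c + t * h l) ` A)" using assms by auto
    fix y assume "y \<in> (\<lambda>l. c + t * h l) ` A"
    then obtain l where "l \<in> A" "y = c + t * h l" by auto
    moreover have "h l \<le> Max (h ` A)" using \<open>l \<in> A\<close> assms by auto
    ultimately show "y \<le> c + t * Max (h ` A)" using assms(3) by (simp add: mult_left_mono)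
  next
    show "c + t * Max (h ` A) \<in> (\<lambda>l. c + t * h l) ` A" using l0 by (metis image_eqI)
  qed
qed

locale prep =
  fixes f :: "real^'n::finite \<Rightarrow> ereal" and J :: "'j set" and u :: "'j \<Rightarrow> real^'n" and v :: "'j \<Rightarrow> real"
    and K :: "'k set" and a :: "'k \<Rightarrow> real^'n" and b :: "'k \<Rightarrow> real"
  assumes finJ: "finite J" and Jne: "J \<noteq> {}" and finK: "finite K"
    and feq: "\<And>x. f x = (if (\<forall>l\<in>K. a l \<bullet> x \<le> b l) then ereal (Max ((\<lambda>l. u l \<bullet> x + v l) ` J)) else \<infinity>)"
begin

definition "D = {x. \<forall>l\<in>K. a l \<bullet> x \<le> b l}"
definition "g x = Max ((\<lambda>l. u l \<bullet> x + v l) ` J)"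
definition "Jx x = {l\<in>J. u l \<bullet> x + v l = g x}"
definition "Kx x = {l\<in>K. a l \<bullet> x = b l}"
definition "Cx x = {w. \<forall>l\<in>Kx x. a l \<bullet> w \<le> 0}"
definition "Mx x w = Max ((\<lambda>l. u l \<bullet> w) ` Jx x)"

lemma f_eq: "f x = (if x \<in> D then ereal (g x) else \<infinity>)"
  using feq[of x] unfolding D_def g_def by simp

lemma domR_eq: "domR f = D"
  unfolding domR_def using f_eq by auto

lemma g_ge: "l \<in> J \<Longrightarrow> u l \<bullet> x + v l \<le> g x"
  unfolding g_def using finJ by auto

lemma Jx_fin: "finite (Jx x)" unfolding Jx_def using finJ by auto

lemma Jx_ne: "Jx x \<noteq> {}"
proof -
  have "g x \<in> (\<lambda>l. u l \<bullet> x + v l) ` J" unfolding g_def using finJ Jne by (intro Max_in) auto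
  then show ?thesis unfolding Jx_def by auto
qed

lemma Mx_ge: "l \<in> Jx x \<Longrightarrow> u l \<bullet> w \<le> Mx x w"
  unfolding Mx_def using Jx_fin by auto

lemma Mx_in: "\<exists>l\<in>Jx x. Mx x w = u l \<bullet> w"
proof -
  have "Mx x w \<in> (\<lambda>l. u l \<bullet> w) ` Jx x" unfolding Mx_def using Jx_fin Jx_ne by (intro Max_in) auto
  then show ?thesis by auto
qed

lemma Mx_scale: "0 \<le> t \<Longrightarrow> Mx x (t *\<^sub>R w) = t * Mx x w"
  unfolding Mx_def using Max_affine[OF Jx_fin Jx_ne, of t 0 "\<lambda>l. u l \<bullet> w"] by simp

lemma Cx_scale: "0 < t \<Longrightarrow> t *\<^sub>R w \<in> Cx x \<longleftrightarrow> w \<in> Cx x"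
  unfolding Cx_def by (auto simp: mult_le_0_iff)

lemma Cx_scale': "0 \<le> t \<Longrightarrow> w \<in> Cx x \<Longrightarrow> t *\<^sub>R w \<in> Cx x"
  unfolding Cx_def by (auto simp: mult_le_0_iff)

lemma lower:
  assumes "x \<in> D" "x + w \<in> D"
  shows "w \<in> Cx x" "g x + Mx x w \<le> g (x + w)"
proof -
  show "w \<in> Cx x" using assms unfolding Cx_def Kx_def D_def by (auto simp: inner_add_right)
  have "Mx x w \<le> g (x + w) - g x"
    unfolding Mx_def using Jx_fin Jx_ne
  proof (subst Max_le_iff, simp_all, intro ballI)
    fix l assume "l \<in> Jx x"
    then have "l \<in> J" "u l \<bullet> x + v l = g x" unfolding Jx_def by auto
    then show "u l \<bullet> w \<le> g (x + w) - g x" using g_ge[of l "x + w"] by (simp add: inner_add_right)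
  qed
  then show "g x + Mx x w \<le> g (x + w)" by simp
qed

lemma local:
  assumes "x \<in> D"
  shows "\<exists>r>0. \<forall>w. norm w < r \<longrightarrow> (x + w \<in> D \<longleftrightarrow> w \<in> Cx x) \<and> g (x + w) = g x + Mx x w"
proof -
  obtain l0 where l0: "l0 \<in> Jx x" using Jx_ne by auto
  have E1: "eventually (\<lambda>w. \<forall>l\<in>K - Kx x. a l \<bullet> (x + w) < b l) (nhds 0)"
  proof (rule eventually_ball_finite)
    show "finite (K - Kx x)" using finK by auto
    show "\<forall>l\<in>K - Kx x. eventually (\<lambda>w. a l \<bullet> (x + w) < b l) (nhds 0)"
    proof
      fix l assume l: "l \<in> K - Kx x"
      then have "a l \<bullet> x < b l" using assms unfolding D_def Kx_def by force
      moreover have "((\<lambda>w. a l \<bullet> (x + w)) \<longlongrightarrow> a l \<bullet> (x + 0)) (nhds 0)"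
        by (intro tendsto_intros filterlim_ident)
      ultimately show "eventually (\<lambda>w. a l \<bullet> (x + w) < b l) (nhds 0)"
        using order_tendstoD(2) by fastforce
    qed
  qed
  have E2: "eventually (\<lambda>w. \<forall>l\<in>J - Jx x. u l \<bullet> (x + w) + v l < u l0 \<bullet> (x + w) + v l0) (nhds 0)"
  proof (rule eventually_ball_finite)
    show "finite (J - Jx x)" using finJ by auto
    show "\<forall>l\<in>J - Jx x. eventually (\<lambda>w. u l \<bullet> (x + w) + v l < u l0 \<bullet> (x + w) + v l0) (nhds 0)"
    proof
      fix l assume l: "l \<in> J - Jx x"
      then have "u l \<bullet> x + v l < g x" using g_ge[of l x] unfolding Jx_def by force
      also have "g x = u l0 \<bullet> x + v l0" using l0 unfolding Jx_def by auto
      finally have lt: "(u l \<bullet> (x + 0) + v l) - (u l0 \<bullet> (x + 0) + v l0) < 0" by simp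
      have "((\<lambda>w. (u l \<bullet> (x + w) + v l) - (u l0 \<bullet> (x + w) + v l0)) \<longlongrightarrow>
          (u l \<bullet> (x + 0) + v l) - (u l0 \<bullet> (x + 0) + v l0)) (nhds 0)"
        by (intro tendsto_intros filterlim_ident)
      from order_tendstoD(2)[OF this lt]
      show "eventually (\<lambda>w. u l \<bullet> (x + w) + v l < u l0 \<bullet> (x + w) + v l0) (nhds 0)"
        by (rule eventually_mono) simp
    qed
  qed
  from eventually_conj[OF E1 E2] obtain r where r: "r > 0"
    and rr: "\<And>w. dist w 0 < r \<Longrightarrow> (\<forall>l\<in>K - Kx x. a l \<bullet> (x + w) < b l) \<and>
        (\<forall>l\<in>J - Jx x. u l \<bullet> (x + w) + v l < u l0 \<bullet> (x + w) + v l0)"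
    unfolding eventually_nhds_metric by blast
  show ?thesis
  proof (intro exI[of _ r] conjI allI impI r)
    fix w :: "real^'n" assume w: "norm w < r"
    then have H: "(\<forall>l\<in>K - Kx x. a l \<bullet> (x + w) < b l) \<and>
        (\<forall>l\<in>J - Jx x. u l \<bullet> (x + w) + v l < u l0 \<bullet> (x + w) + v l0)" using rr by simp
    show "x + w \<in> D \<longleftrightarrow> w \<in> Cx x"
    proof
      assume "x + w \<in> D" then show "w \<in> Cx x" using lower(1) assms by blast
    next
      assume "w \<in> Cx x"
      have "a l \<bullet> (x + w) \<le> b l" if "l \<in> K" for l
      proof (cases "l \<in> Kx x")
        case True
        then have "a l \<bullet> x = b l" "a l \<bullet> w \<le> 0" using \<open>w \<in> Cx x\<close> unfolding Kx_def Cx_def by auto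
        then show ?thesis by (simp add: inner_add_right)
      next
        case False
        then show ?thesis using H that by (meson DiffI less_eq_real_def)
      qed
      then show "x + w \<in> D" unfolding D_def by auto
    qed
    show "g (x + w) = g x + Mx x w"
      unfolding g_def[of "x + w"]
    proof (rule Max_eqI)
      show "finite ((\<lambda>l. u l \<bullet> (x + w) + v l) ` J)" using finJ by auto
      obtain l1 where l1: "l1 \<in> Jx x" "Mx x w = u l1 \<bullet> w"
        using Mx_in by blast
      have ev: "u l \<bullet> (x + w) + v l = g x + u l \<bullet> w" if "l \<in> Jx x" for l
        using that unfolding Jx_def by (auto simp: inner_add_right)
      show "g x + Mx x w \<in> (\<lambda>l. u l \<bullet> (x + w) + v l) ` J"
        using l1 ev[OF l1(1)] unfolding Jx_def by force
      fix y assume "y \<in> (\<lambda>l. u l \<bullet> (x + w) + v l) ` J"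
      then obtain l where l: "l \<in> J" "y = u l \<bullet> (x + w) + v l" by auto
      show "y \<le> g x + Mx x w"
      proof (cases "l \<in> Jx x")
        case True then show ?thesis using l ev Mx_ge by fastforce
      next
        case False
        then have "y < u l0 \<bullet> (x + w) + v l0" using H l by auto
        also have "\<dots> \<le> g x + Mx x w" using ev[OF l0] Mx_ge[OF l0, of w] by simp
        finally show ?thesis by simp
      qed
    qed
  qed
qed

lemma dderiv_eq:
  assumes "x \<in> D"
  shows "dderiv f x i j = (if unitv i - unitv j \<in> Cx x then ereal (Mx x (unitv i - unitv j)) else \<infinity>)"
    (is "_ = ?Q")
proof -
  define d where "d = unitv i - unitv j"
  obtain r where r: "r > 0" and rr: "\<And>w. norm w < r \<Longrightarrow> (x + w \<in> D \<longleftrightarrow> w \<in> Cx x) \<and> g (x + w) = g x + Mx x w"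
    using local[OF assms] by blast
  have ev: "eventually (\<lambda>\<alpha>. (f (x + \<alpha> *\<^sub>R d) - f x) / ereal \<alpha> = ?Q) (at_right 0)"
  proof (rule eventually_at_rightI)
    have "0 < norm d + 1" by (simp add: add_nonneg_pos)
    then show "(0::real) < r / (norm d + 1)" using r by simp
    fix \<alpha> :: real assume "\<alpha> \<in> {0<..<r / (norm d + 1)}"
    then have a0: "0 < \<alpha>" and a1: "\<alpha> * (norm d + 1) < r" by (auto simp: field_simps add_pos_nonneg)
    have "norm (\<alpha> *\<^sub>R d) < r" using a0 a1 by (simp add: algebra_simps)
    from rr[OF this] have H: "x + \<alpha> *\<^sub>R d \<in> D \<longleftrightarrow> d \<in> Cx x" "g (x + \<alpha> *\<^sub>R d) = g x + \<alpha> * Mx x d"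
      using Cx_scale[OF a0] Mx_scale[of \<alpha> x d] a0 by auto
    show "(f (x + \<alpha> *\<^sub>R d) - f x) / ereal \<alpha> = ?Q"
    proof (cases "d \<in> Cx x")
      case True
      then have "f (x + \<alpha> *\<^sub>R d) - f x = ereal (\<alpha> * Mx x d)" using H assms f_eq by auto
      then show ?thesis using True a0 d_def by simp
    next
      case False
      then have "f (x + \<alpha> *\<^sub>R d) - f x = \<infinity>" using H assms f_eq by auto
      then show ?thesis using False a0 d_def by simp
    qed
  qed
  show ?thesis unfolding dderiv_def
    using tendsto_Lim[OF trivial_limit_at_right_real tendsto_eventually[OF ev]] by (simp add: d_def)
qed

end



lemma unitv_comp: "unitv a $ x = (if x = a then 1 else 0)"
  by (simp add: unitv_def axis_def)

lemma cont_Max: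
  fixes h :: "'a \<Rightarrow> 'b::topological_space \<Rightarrow> real"
  assumes "finite A" "A \<noteq> {}" "\<And>l. l \<in> A \<Longrightarrow> continuous_on S (h l)"
  shows "continuous_on S (\<lambda>w. Max ((\<lambda>l. h l w) ` A))"
  using assms
proof (induction A rule: finite_ne_induct)
  case (singleton x) then show ?case by simp
next
  case (insert x F)
  have "(\<lambda>w. Max ((\<lambda>l. h l w) ` insert x F)) = (\<lambda>w. max (h x w) (Max ((\<lambda>l. h l w) ` F)))"
    using insert by auto
  then show ?case using insert by (auto intro: continuous_on_max)
qed

definition S1 :: "'n::finite set \<Rightarrow> 'n set \<Rightarrow> (real^'n) set" where
  "S1 P M = {w. (\<forall>x. x \<in> P \<longrightarrow> 0 \<le> w$x) \<and> (\<forall>x. x \<in> M \<longrightarrow> w$x \<le> 0) \<and>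
     (\<forall>x. x \<notin> P \<longrightarrow> x \<notin> M \<longrightarrow> w$x = 0) \<and> sum (\<lambda>x. w$x) UNIV = 0 \<and>
     sum (\<lambda>x. w$x) P - sum (\<lambda>x. w$x) M = 1}"

lemma closed_S1:
  fixes P M :: "'n::finite set"
  shows "closed (S1 P M)"
proof -
  have c1: "closed {w::real^'n. x \<in> P \<longrightarrow> 0 \<le> w$x}" for x
    by (cases "x \<in> P") (simp_all add: closed_Collect_le continuous_on_component continuous_on_id)
  have c2: "closed {w::real^'n. x \<in> M \<longrightarrow> w$x \<le> 0}" for x
    by (cases "x \<in> M") (simp_all add: closed_Collect_le continuous_on_component continuous_on_id)
  have c3: "closed {w::real^'n. x \<notin> P \<longrightarrow> x \<notin> M \<longrightarrow> w$x = 0}" for x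
    by (cases "x \<notin> P \<and> x \<notin> M") (auto simp add: closed_Collect_eq continuous_on_component continuous_on_id)
  have c4: "closed {w::real^'n. sum (\<lambda>x. w$x) UNIV = 0}"
    by (intro closed_Collect_eq continuous_intros)
  have c5: "closed {w::real^'n. sum (\<lambda>x. w$x) P - sum (\<lambda>x. w$x) M = 1}"
    by (intro closed_Collect_eq continuous_intros)
  have "S1 P M = {w. \<forall>x. x \<in> P \<longrightarrow> 0 \<le> w$x} \<inter> {w. \<forall>x. x \<in> M \<longrightarrow> w$x \<le> 0} \<inter>
     {w. \<forall>x. x \<notin> P \<longrightarrow> x \<notin> M \<longrightarrow> w$x = 0} \<inter> {w::real^'n. sum (\<lambda>x. w$x) UNIV = 0} \<inter>
     {w::real^'n. sum (\<lambda>x. w$x) P - sum (\<lambda>x. w$x) M = 1}"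
    unfolding S1_def by auto
  then show ?thesis by (simp only:) (intro closed_Int closed_Collect_all c1 c2 c3 c4 c5)
qed

lemma S1_bound:
  assumes "w \<in> S1 P M" "P \<inter> M = {}"
  shows "\<bar>w$x\<bar> \<le> 1"
proof -
  from assms have pos: "\<And>x. x \<in> P \<Longrightarrow> 0 \<le> w$x" and neg: "\<And>x. x \<in> M \<Longrightarrow> w$x \<le> 0"
    and z: "\<And>x. x \<notin> P \<Longrightarrow> x \<notin> M \<Longrightarrow> w$x = 0"
    and m: "sum (\<lambda>x. w$x) P - sum (\<lambda>x. w$x) M = 1" unfolding S1_def by auto
  have sP: "0 \<le> sum (\<lambda>x. w$x) P" using pos by (simp add: sum_nonneg)
  have sM: "sum (\<lambda>x. w$x) M \<le> 0" using neg by (simp add: sum_nonpos)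
  show ?thesis
  proof (cases "x \<in> P")
    case True
    have "w$x \<le> sum (\<lambda>x. w$x) P" using True pos by (intro member_le_sum) auto
    then show ?thesis using True pos sM m by auto
  next
    case False
    show ?thesis
    proof (cases "x \<in> M")
      case True
      have "- w$x \<le> sum (\<lambda>x. - w$x) M" using True neg by (intro member_le_sum) auto
      then have "- w$x \<le> - sum (\<lambda>x. w$x) M" by (simp add: sum_negf)
      then show ?thesis using True neg sP m by auto
    next
      case False
      then show ?thesis using z \<open>x \<notin> P\<close> by auto
    qed
  qed
qed

lemma bounded_S1: "P \<inter> M = {} \<Longrightarrow> bounded (S1 P M :: (real^'n::finite) set)"
  unfolding bounded_iff
proof (intro exI ballI)
  fix w :: "real^'n" assume "w \<in> S1 P M" "P \<inter> M = {}"
  have "norm w \<le> sum (\<lambda>i. \<bar>w$i\<bar>) UNIV" by (rule norm_le_l1_cart)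
  also have "\<dots> \<le> sum (\<lambda>i. 1) (UNIV :: 'n set)"
    using S1_bound[OF \<open>w \<in> S1 P M\<close> \<open>P \<inter> M = {}\<close>] by (intro sum_mono) auto
  finally show "norm w \<le> real CARD('n)" by simp
qed




context prep begin

lemma closed_Cx: "closed (Cx y)"
proof -
  have "Cx y = (\<Inter>l\<in>Kx y. {w. a l \<bullet> w \<le> 0})" unfolding Cx_def by auto
  then show ?thesis by (simp add: closed_INT closed_halfspace_le)
qed

lemma key:
  fixes P M :: "'n set" and \<beta> :: "'n \<Rightarrow> real" and y w :: "real^'n"
  assumes Mex: "\<forall>x\<in>domR f. \<forall>z\<in>domR f. \<forall>i. x$i > z$i \<longrightarrow> (\<exists>j. x$j < z$j \<and> (\<exists>\<epsilon>0>0. \<forall>\<epsilon>\<in>{0..\<epsilon>0}.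
           f x + f z \<ge> f (x - \<epsilon> *\<^sub>R (unitv i - unitv j)) + f (z + \<epsilon> *\<^sub>R (unitv i - unitv j))))"
    and y: "y \<in> D" and disj: "P \<inter> M = {}"
    and beta: "\<And>p c. p \<in> P \<Longrightarrow> c \<in> M \<Longrightarrow> unitv p - unitv c \<in> Cx y \<Longrightarrow> \<beta> p \<le> Mx y (unitv p - unitv c)"
    and w: "w \<in> S1 P M" "w \<in> Cx y"
  shows "(\<Sum>x\<in>P. \<beta> x * w$x) \<le> Mx y w"
proof (rule ccontr)
  define L where "L w = (\<Sum>x\<in>P. \<beta> x * w$x)" for w :: "real^'n"
  define H where "H w = Mx y w - L w" for w
  assume "\<not> ?thesis"
  then have Hw: "H w < 0" unfolding H_def L_def by simp
  define Z where "Z = S1 P M \<inter> Cx y"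
  have cZ: "compact Z" unfolding Z_def compact_eq_bounded_closed
    using bounded_S1[OF disj] closed_S1 closed_Cx by (auto intro: bounded_subset)
  have contH: "continuous_on Z H"
  proof -
    have "continuous_on Z (\<lambda>w. Max ((\<lambda>l. u l \<bullet> w) ` Jx y))"
      by (rule cont_Max[OF Jx_fin Jx_ne]) (intro continuous_intros)
    moreover have "continuous_on Z L" unfolding L_def
      by (intro continuous_intros continuous_on_component continuous_on_id)
    ultimately show ?thesis unfolding H_def Mx_def by (intro continuous_on_diff)
  qed
  have "Z \<noteq> {}" using w Z_def by auto
  from continuous_attains_inf[OF cZ this contH] obtain p where pZ: "p \<in> Z" and pmin: "\<And>z. z \<in> Z \<Longrightarrow> H p \<le> H z"
    by blast
  have Hp: "H p < 0" using pmin[of w] w Hw Z_def by auto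
  from pZ have pS: "p \<in> S1 P M" and pC: "p \<in> Cx y" unfolding Z_def by auto
  from pS have ppos: "\<And>x. x \<in> P \<Longrightarrow> 0 \<le> p$x" and pneg: "\<And>x. x \<in> M \<Longrightarrow> p$x \<le> 0"
    and pz: "\<And>x. x \<notin> P \<Longrightarrow> x \<notin> M \<Longrightarrow> p$x = 0"
    and psum: "sum (\<lambda>x. p$x) UNIV = 0"
    and pm: "sum (\<lambda>x. p$x) P - sum (\<lambda>x. p$x) M = 1" unfolding S1_def by auto
  obtain s where sP: "s \<in> P" and ps: "p$s > 0"
  proof (rule ccontr)
    assume "\<not> thesis"
    then have np: "\<And>x. x \<in> P \<Longrightarrow> p$x \<le> 0" using that by force
    have "\<forall>x. 0 \<le> - p$x" using np pneg pz by (metis neg_0_le_iff_le order_refl)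
    moreover have "sum (\<lambda>x. - p$x) UNIV = 0" using psum by (simp add: sum_negf)
    ultimately have "\<forall>x. p$x = 0" using sum_nonneg_eq_0_iff[of UNIV "\<lambda>x. - p$x"] by auto
    then show False using pm by simp
  qed
  obtain r where r: "r > 0" and rr: "\<And>w. norm w < r \<Longrightarrow> (y + w \<in> D \<longleftrightarrow> w \<in> Cx y) \<and> g (y + w) = g y + Mx y w"
    using local[OF y] by blast
  define sc where "sc = r / (2 * (norm p + 1))"
  have np1: "0 < norm p + 1" by (simp add: add_nonneg_pos)
  have sc0: "sc > 0" unfolding sc_def using r np1 by simp
  have rp: "0 \<le> r * norm p" using r by simp
  have "norm (sc *\<^sub>R p) = r * norm p / (2 * (norm p + 1))" unfolding sc_def using r by simp
  also have "\<dots> < r" proof - have "r * norm p < r * (2 * (norm p + 1))" using r by (intro mult_strict_left_mono) (simp_all add: add_nonneg_pos) then show ?thesis using np1 by (simp add: pos_divide_less_eq mult.commute) qed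
  finally have nsp: "norm (sc *\<^sub>R p) < r" .
  define x1 where "x1 = y + sc *\<^sub>R p"
  have scC: "sc *\<^sub>R p \<in> Cx y" using Cx_scale'[of sc p y] sc0 pC by simp
  have x1D: "x1 \<in> D" and gx1: "g x1 = g y + sc * Mx y p"
    using rr[OF nsp] scC Mx_scale[of sc y p] sc0 unfolding x1_def by auto
  have x1s: "x1$s > y$s" unfolding x1_def using sc0 ps by simp
  from Mex x1D y x1s obtain c \<epsilon>0 where cc: "x1$c < y$c" and e0: "\<epsilon>0 > 0"
    and exch: "\<And>\<epsilon>. \<epsilon> \<in> {0..\<epsilon>0} \<Longrightarrow> f x1 + f y \<ge> f (x1 - \<epsilon> *\<^sub>R (unitv s - unitv c)) + f (y + \<epsilon> *\<^sub>R (unitv s - unitv c))"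
    unfolding domR_eq by blast
  have pc: "p$c < 0" using cc sc0 unfolding x1_def by (simp add: mult_less_0_iff)
  have cM: "c \<in> M" and cP: "c \<notin> P" using pc ppos pz by (metis less_irrefl not_le)+
  have cs: "c \<noteq> s" using cP sP by auto
  have ps1: "p$s \<le> 1" using S1_bound[OF pS disj, of s] by simp
  define \<epsilon> where "\<epsilon> = min \<epsilon>0 (sc * min (p$s) (- p$c) / 4)"
  have eps0: "\<epsilon> > 0" unfolding \<epsilon>_def using e0 sc0 ps pc by simp
  have epsle: "\<epsilon> \<le> \<epsilon>0" unfolding \<epsilon>_def by simp
  define e where "e = \<epsilon> / sc"
  have e0': "e > 0" unfolding e_def using eps0 sc0 by simp
  have "\<epsilon> \<le> sc * min (p$s) (- p$c) / 4" unfolding \<epsilon>_def by simp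
  then have "\<epsilon> / sc \<le> (sc * min (p$s) (- p$c) / 4) / sc" using sc0 by (intro divide_right_mono) auto
  then have "e \<le> min (p$s) (- p$c) / 4" unfolding e_def using sc0 by simp
  then have es: "e \<le> p$s / 4" and ec: "e \<le> - p$c / 4" by auto
  have eps_eq: "\<epsilon> = sc * e" unfolding e_def using sc0 by simp
  define d where "d = unitv s - unitv c"
  have dcomp: "d$x = (if x = s then 1 else 0) - (if x = c then 1 else 0)" for x
    unfolding d_def by (simp add: unitv_comp)
  from exch[of \<epsilon>] have ex: "f x1 + f y \<ge> f (x1 - \<epsilon> *\<^sub>R d) + f (y + \<epsilon> *\<^sub>R d)"
    using eps0 epsle unfolding d_def by auto
  have fx1: "f x1 = ereal (g x1)" and fy: "f y = ereal (g y)" using x1D y f_eq by auto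
  have D1: "x1 - \<epsilon> *\<^sub>R d \<in> D" and D2: "y + \<epsilon> *\<^sub>R d \<in> D"
  proof -
    have fin: "f x1 + f y < \<infinity>" using fx1 fy by simp
    have nm: "f z \<noteq> -\<infinity>" for z using f_eq[of z] by (auto split: if_splits)
    show "x1 - \<epsilon> *\<^sub>R d \<in> D"
    proof (rule ccontr)
      assume "x1 - \<epsilon> *\<^sub>R d \<notin> D"
      then have "f (x1 - \<epsilon> *\<^sub>R d) = \<infinity>" using f_eq by simp
      then show False using ex fin nm[of "y + \<epsilon> *\<^sub>R d"] by (cases "f (y + \<epsilon> *\<^sub>R d)") auto
    qed
    show "y + \<epsilon> *\<^sub>R d \<in> D"
    proof (rule ccontr)
      assume "y + \<epsilon> *\<^sub>R d \<notin> D"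
      then have "f (y + \<epsilon> *\<^sub>R d) = \<infinity>" using f_eq by simp
      then show False using ex fin nm[of "x1 - \<epsilon> *\<^sub>R d"] by (cases "f (x1 - \<epsilon> *\<^sub>R d)") auto
    qed
  qed
  have real_ex: "g (x1 - \<epsilon> *\<^sub>R d) + g (y + \<epsilon> *\<^sub>R d) \<le> g x1 + g y"
    using ex fx1 fy f_eq D1 D2 by simp
  define q where "q = p - e *\<^sub>R d"
  have sq: "sc *\<^sub>R q = sc *\<^sub>R p - \<epsilon> *\<^sub>R d" unfolding q_def eps_eq by (simp add: algebra_simps)
  have x1eq: "x1 - \<epsilon> *\<^sub>R d = y + sc *\<^sub>R q" unfolding sq x1_def by (simp add: algebra_simps)
  have l1: "sc *\<^sub>R q \<in> Cx y" "g y + Mx y (sc *\<^sub>R q) \<le> g (x1 - \<epsilon> *\<^sub>R d)"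
    using lower[OF y, of "sc *\<^sub>R q"] D1 x1eq by auto
  have qC: "q \<in> Cx y" using l1(1) Cx_scale[OF sc0] by auto
  have l2: "\<epsilon> *\<^sub>R d \<in> Cx y" "g y + Mx y (\<epsilon> *\<^sub>R d) \<le> g (y + \<epsilon> *\<^sub>R d)"
    using lower[OF y D2] by auto
  have dC: "d \<in> Cx y" using l2(1) Cx_scale[OF eps0] by auto
  have bs: "\<beta> s \<le> Mx y d" using beta[OF sP cM] dC unfolding d_def by simp
  have "sc * Mx y q + \<epsilon> * Mx y d \<le> sc * Mx y p"
    using real_ex l1(2) l2(2) gx1 Mx_scale[of sc y q] Mx_scale[of \<epsilon> y d] sc0 eps0 by simp
  moreover have "\<epsilon> * \<beta> s \<le> \<epsilon> * Mx y d" using bs eps0 by (simp add: mult_left_mono)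
  ultimately have "sc * (Mx y q + e * \<beta> s) \<le> sc * Mx y p" unfolding eps_eq by (simp add: algebra_simps)
  then have Mq: "Mx y q + e * \<beta> s \<le> Mx y p" using sc0 by simp
  have qcomp: "q$x = p$x - e * ((if x = s then 1 else 0) - (if x = c then 1 else 0))" for x
    unfolding q_def using dcomp by simp
  have Lq: "L q = L p - e * \<beta> s"
  proof -
    have "L q = (\<Sum>x\<in>P. \<beta> x * p$x - e * (\<beta> x * ((if x = s then 1 else 0) - (if x = c then 1 else 0))))"
      unfolding L_def qcomp by (simp add: algebra_simps)
    also have "\<dots> = L p - e * (\<Sum>x\<in>P. \<beta> x * ((if x = s then 1 else 0) - (if x = c then 1 else 0)))"
      unfolding L_def by (simp add: sum_subtractf sum_distrib_left)
    also have "(\<Sum>x\<in>P. \<beta> x * ((if x = s then 1 else 0) - (if x = c then 1 else 0))) = \<beta> s"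
    proof -
      have "(\<Sum>x\<in>P. \<beta> x * ((if x = s then 1 else 0) - (if x = c then 1 else 0))) = (\<Sum>x\<in>P. if x = s then \<beta> x else 0)"
        by (rule sum.cong) (use cP in auto)
      then show ?thesis using sP by simp
    qed
    finally show ?thesis .
  qed
  have Hq: "H q \<le> H p" unfolding H_def using Lq Mq by simp
  have sumq: "sum (\<lambda>x. q$x) A = sum (\<lambda>x. p$x) A - e * ((if s \<in> A then 1 else 0) - (if c \<in> A then 1 else 0))"
    if "finite A" for A
    unfolding qcomp using that by (simp add: sum_subtractf right_diff_distrib sum_distrib_left[symmetric] sum.delta)
  have mq: "sum (\<lambda>x. q$x) P - sum (\<lambda>x. q$x) M = 1 - 2 * e"
    using sumq[of P] sumq[of M] sP cP cM disj pm by auto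
  have e14: "e \<le> 1/4" using es ps1 by simp
  define t where "t = 1 / (1 - 2 * e)"
  have t1: "t > 1" unfolding t_def using e0' e14 by (simp add: field_simps)
  define q' where "q' = t *\<^sub>R q"
  have q'S: "q' \<in> S1 P M"
    unfolding S1_def mem_Collect_eq
  proof (intro conjI allI impI)
    fix x assume "x \<in> P" then show "0 \<le> q'$x" unfolding q'_def using t1 qcomp[of x] ppos[of x] es cP
      by (auto intro!: mult_nonneg_nonneg)
  next
    fix x assume "x \<in> M" then show "q'$x \<le> 0" unfolding q'_def using t1 qcomp[of x] pneg[of x] ec sP disj
      by (auto simp: mult_le_0_iff)
  next
    fix x assume "x \<notin> P" "x \<notin> M" then show "q'$x = 0" unfolding q'_def using qcomp[of x] pz[of x] sP cM
      by auto
  next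
    show "sum (\<lambda>x. q'$x) UNIV = 0" unfolding q'_def using sumq[of UNIV] psum by (simp add: sum_distrib_left[symmetric])
  next
    have "sum (\<lambda>x. q'$x) P - sum (\<lambda>x. q'$x) M = t * (sum (\<lambda>x. q$x) P - sum (\<lambda>x. q$x) M)"
      unfolding q'_def by (simp add: sum_distrib_left[symmetric] algebra_simps)
    then show "sum (\<lambda>x. q'$x) P - sum (\<lambda>x. q'$x) M = 1" using mq t_def e14 by simp
  qed
  have q'C: "q' \<in> Cx y" unfolding q'_def using Cx_scale'[of t q y] t1 qC by simp
  have Hq': "H q' = t * H q"
    unfolding H_def q'_def L_def using Mx_scale[of t y q] t1 by (simp add: sum_distrib_left algebra_simps)
  have "t * H q \<le> t * H p" using Hq t1 by simp
  also have "t * H p < H p" using t1 Hp by (simp add: mult_less_cancel_right1)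
  finally have "H q' < H p" using Hq' by simp
  moreover have "H p \<le> H q'" using pmin[of q'] q'S q'C Z_def by auto
  ultimately show False by simp
qed

end



lemma conv_aux:
  fixes X W c l :: real
  assumes "X \<le> 0" "X + c * W \<le> 0" "0 \<le> l" "l \<le> c"
  shows "X + l * W \<le> 0"
proof (cases "W \<le> 0")
  case True
  then have "l * W \<le> 0" using assms(3) by (simp add: mult_nonneg_nonpos)
  then show ?thesis using assms(1) by simp
next
  case False
  then have "l * W \<le> c * W" using assms(4) by (simp add: mult_right_mono)
  then show ?thesis using assms(2) by simp
qed

context prep begin

lemma key_apply:
  fixes P M :: "'n set" and \<beta> :: "'n \<Rightarrow> real" and y w :: "real^'n"
  assumes Mex: "\<forall>x\<in>domR f. \<forall>z\<in>domR f. \<forall>i. x$i > z$i \<longrightarrow> (\<exists>j. x$j < z$j \<and> (\<exists>\<epsilon>0>0. \<forall>\<epsilon>\<in>{0..\<epsilon>0}.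
           f x + f z \<ge> f (x - \<epsilon> *\<^sub>R (unitv i - unitv j)) + f (z + \<epsilon> *\<^sub>R (unitv i - unitv j))))"
    and y: "y \<in> D" and disj: "P \<inter> M = {}"
    and beta: "\<And>p c. p \<in> P \<Longrightarrow> c \<in> M \<Longrightarrow> unitv p - unitv c \<in> Cx y \<Longrightarrow> \<beta> p \<le> Mx y (unitv p - unitv c)"
    and wC: "w \<in> Cx y"
    and sP: "\<And>x. x \<in> P \<Longrightarrow> 0 \<le> w$x" and sM: "\<And>x. x \<in> M \<Longrightarrow> w$x \<le> 0"
    and z: "\<And>x. x \<notin> P \<Longrightarrow> x \<notin> M \<Longrightarrow> w$x = 0"
    and s0: "sum (\<lambda>x. w$x) UNIV = 0"
    and mu: "sum (\<lambda>x. w$x) P - sum (\<lambda>x. w$x) M > 0"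
  shows "(\<Sum>x\<in>P. \<beta> x * w$x) \<le> Mx y w"
proof -
  define \<mu> where "\<mu> = sum (\<lambda>x. w$x) P - sum (\<lambda>x. w$x) M"
  define t where "t = 1 / \<mu>"
  have t0: "t > 0" unfolding t_def \<mu>_def using mu by simp
  define w' where "w' = t *\<^sub>R w"
  have w'S: "w' \<in> S1 P M" unfolding S1_def mem_Collect_eq
  proof (intro conjI allI impI)
    fix x assume "x \<in> P" then show "0 \<le> w'$x" unfolding w'_def using t0 sP by simp
  next
    fix x assume "x \<in> M" then show "w'$x \<le> 0" unfolding w'_def using t0 sM by (simp add: mult_nonneg_nonpos)
  next
    fix x assume "x \<notin> P" "x \<notin> M" then show "w'$x = 0" unfolding w'_def using z by simp
  next
    show "sum (\<lambda>x. w'$x) UNIV = 0" unfolding w'_def using s0 by (simp add: sum_distrib_left[symmetric])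
  next
    have "sum (\<lambda>x. w'$x) P - sum (\<lambda>x. w'$x) M = t * \<mu>" unfolding w'_def \<mu>_def
      by (simp add: sum_distrib_left[symmetric] algebra_simps)
    then show "sum (\<lambda>x. w'$x) P - sum (\<lambda>x. w'$x) M = 1" unfolding t_def using mu \<mu>_def by simp
  qed
  have w'C: "w' \<in> Cx y" unfolding w'_def using Cx_scale'[of t w y] t0 wC by simp
  from key[OF Mex y disj beta w'S w'C]
  have "(\<Sum>x\<in>P. \<beta> x * w'$x) \<le> Mx y w'" by blast
  then have "t * (\<Sum>x\<in>P. \<beta> x * w$x) \<le> t * Mx y w"
    unfolding w'_def using Mx_scale[of t y w] t0 by (simp add: sum_distrib_left algebra_simps)
  then show ?thesis using t0 by simp
qed

lemma main_loc:
  fixes y :: "real^'n" and i h k :: 'n and lam :: real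
  assumes Mex: "\<forall>x\<in>domR f. \<forall>z\<in>domR f. \<forall>i. x$i > z$i \<longrightarrow> (\<exists>j. x$j < z$j \<and> (\<exists>\<epsilon>0>0. \<forall>\<epsilon>\<in>{0..\<epsilon>0}.
           f x + f z \<ge> f (x - \<epsilon> *\<^sub>R (unitv i - unitv j)) + f (z + \<epsilon> *\<^sub>R (unitv i - unitv j))))"
    and bdd: "bounded (domR f)"
    and yD: "y \<in> domR f"
    and phi0: "phiR f y < 0"
    and hi: "\<forall>j. j \<noteq> i \<longrightarrow> dderiv f y i j > phiR f y"
    and hk: "h \<noteq> k"
    and dhk: "dderiv f y h k = phiR f y"
    and lam0: "0 < lam" and lamc: "lam \<le> cbarR f y h k"
  shows "\<forall>j. j \<noteq> i \<longrightarrow> dderiv f (y + lam *\<^sub>R (unitv h - unitv k)) i j > phiR f y"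
proof -
  have y: "y \<in> D" using yD domR_eq by simp
  define d where "d = unitv h - unitv k"
  have dcomp: "d$x = (if x = h then 1 else 0) - (if x = k then 1 else 0)" for x
    unfolding d_def by (simp add: unitv_comp)
  define \<phi> where "\<phi> = Mx y d"
  have dC: "d \<in> Cx y" and phieq: "phiR f y = ereal \<phi>"
    using dhk phi0 dderiv_eq[OF y, of h k] unfolding d_def[symmetric] \<phi>_def
    by (auto split: if_splits)
  have phin: "\<phi> < 0" using phi0 phieq by simp
  have finS: "finite {dderiv f y i j | i j. True}"
    by (rule finite_subset[of _ "(\<lambda>(i,j). dderiv f y i j) ` UNIV"]) auto
  have phile: "ereal \<phi> \<le> dderiv f y a c" for a c
    unfolding phieq[symmetric] phiR_def using finS by (intro Min_le) auto
  have ih: "i \<noteq> h"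
  proof
    assume "i = h"
    then have "dderiv f y h k > phiR f y" using hi hk by auto
    then show False using dhk by simp
  qed
  define Vs where "Vs = {Mx y (unitv i - unitv c) | c. c \<noteq> i \<and> unitv i - unitv c \<in> Cx y}"
  have finV: "finite Vs" unfolding Vs_def
    by (rule finite_subset[of _ "(\<lambda>c. Mx y (unitv i - unitv c)) ` UNIV"]) auto
  define mr where "mr = Min (insert (\<phi> + 1) Vs)"
  have Vs_gt: "\<phi> < v" if "v \<in> Vs" for v
  proof -
    from that obtain c where c: "c \<noteq> i" "unitv i - unitv c \<in> Cx y" "v = Mx y (unitv i - unitv c)"
      unfolding Vs_def by auto
    have "dderiv f y i c = ereal v" using dderiv_eq[OF y, of i c] c by simp
    then show ?thesis using hi c(1) phieq by auto
  qed
  have mr_gt: "\<phi> < mr" unfolding mr_def using finV Vs_gt by simp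
  have mr_le: "mr \<le> Mx y (unitv i - unitv c)" if "c \<noteq> i" "unitv i - unitv c \<in> Cx y" for c
    unfolding mr_def using finV that by (intro Min_le) (auto simp: Vs_def)
  define \<beta> where "\<beta> x = (if x = i then mr else \<phi>)" for x
  have beta: "\<beta> p \<le> Mx y (unitv p - unitv c)" if "p \<noteq> c" "unitv p - unitv c \<in> Cx y" for p c
  proof (cases "p = i")
    case True then show ?thesis using mr_le that unfolding \<beta>_def by auto
  next
    case False
    have "ereal \<phi> \<le> ereal (Mx y (unitv p - unitv c))" using phile[of p c] dderiv_eq[OF y, of p c] that by simp
    then show ?thesis using False unfolding \<beta>_def by simp
  qed
  define T where "T = {c. 0 \<le> c} \<inter> (\<Inter>l\<in>K. {c. a l \<bullet> (y + c *\<^sub>R d) \<le> b l}) \<inter>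
       (\<Inter>l\<in>J. {c. u l \<bullet> (y + c *\<^sub>R d) + v l \<le> g y + c * \<phi>})"
  have Tmem: "c \<in> T \<longleftrightarrow> 0 \<le> c \<and> y + c *\<^sub>R d \<in> D \<and> (\<forall>l\<in>J. u l \<bullet> (y + c *\<^sub>R d) + v l \<le> g y + c * \<phi>)" for c
    unfolding T_def D_def by auto
  have Peq: "(0 \<le> c \<and> f (y + c *\<^sub>R d) - f y = ereal c * dderiv f y h k) \<longleftrightarrow> c \<in> T" for c
  proof -
    have fy: "f y = ereal (g y)" using y f_eq by simp
    have dd: "dderiv f y h k = ereal \<phi>" using dhk phieq by simp
    show ?thesis
    proof (cases "0 \<le> c \<and> y + c *\<^sub>R d \<in> D")
      case True
      then have c0: "0 \<le> c" and cD: "y + c *\<^sub>R d \<in> D" by auto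
      have lw: "g y + c * \<phi> \<le> g (y + c *\<^sub>R d)"
        using lower(2)[OF y cD] Mx_scale[OF c0, of y d] unfolding \<phi>_def by simp
      have "f (y + c *\<^sub>R d) - f y = ereal c * dderiv f y h k \<longleftrightarrow> g (y + c *\<^sub>R d) - g y = c * \<phi>"
        using cD fy dd f_eq by simp
      also have "\<dots> \<longleftrightarrow> g (y + c *\<^sub>R d) \<le> g y + c * \<phi>" using lw by auto
      also have "\<dots> \<longleftrightarrow> (\<forall>l\<in>J. u l \<bullet> (y + c *\<^sub>R d) + v l \<le> g y + c * \<phi>)"
        unfolding g_def[of "y + c *\<^sub>R d"] using finJ Jne by (simp add: Max_le_iff)
      finally show ?thesis using Tmem True by auto
    next
      case False
      moreover have "y + c *\<^sub>R d \<notin> D \<Longrightarrow> f (y + c *\<^sub>R d) - f y \<noteq> ereal c * dderiv f y h k"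
        using fy dd f_eq by simp
      ultimately show ?thesis using Tmem by auto
    qed
  qed
  have cbar_eq: "cbarR f y h k = Greatest (\<lambda>c. c \<in> T)"
    unfolding cbarR_def d_def[symmetric] using Peq by simp
  have clT: "closed T" unfolding T_def
    by (intro closed_Int closed_INT ballI closed_Collect_le continuous_intros)
  obtain B where B: "\<And>z. z \<in> domR f \<Longrightarrow> norm z \<le> B" using bdd unfolding bounded_iff by auto
  have bddT: "bdd_above T"
  proof (rule bdd_aboveI)
    fix c assume "c \<in> T"
    then have "y + c *\<^sub>R d \<in> D" using Tmem by auto
    then have "norm (y + c *\<^sub>R d) \<le> B" using B domR_eq by auto
    moreover have "(y + c *\<^sub>R d)$h = y$h + c" using dcomp hk by simp
    moreover have "\<bar>(y + c *\<^sub>R d)$h\<bar> \<le> norm (y + c *\<^sub>R d)" by (rule component_le_norm_cart)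
    moreover have "\<bar>y$h\<bar> \<le> norm y" by (rule component_le_norm_cart)
    ultimately show "c \<le> B + norm y" by linarith
  qed
  have T0: "0 \<in> T" using Tmem y g_ge by simp
  define cm where "cm = Sup T"
  have cmT: "cm \<in> T" unfolding cm_def using T0 bddT clT by (intro closed_contains_Sup) auto
  have cm_ge: "c \<le> cm" if "c \<in> T" for c unfolding cm_def using bddT that by (rule cSup_upper[rotated])
  have "cbarR f y h k = cm" unfolding cbar_eq using cmT cm_ge by (intro Greatest_equality) auto
  then have lamcm: "lam \<le> cm" using lamc by simp
  have lamT: "lam \<in> T"
  proof -
    have cmD: "y + cm *\<^sub>R d \<in> D" and cmJ: "\<forall>l\<in>J. u l \<bullet> (y + cm *\<^sub>R d) + v l \<le> g y + cm * \<phi>"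
      using cmT Tmem by auto
    have "y + lam *\<^sub>R d \<in> D" unfolding D_def
    proof (intro CollectI ballI)
      fix l assume l: "l \<in> K"
      have A1: "a l \<bullet> y - b l \<le> 0" using y l unfolding D_def by auto
      have A2: "(a l \<bullet> y - b l) + cm * (a l \<bullet> d) \<le> 0" using cmD l unfolding D_def by (auto simp: inner_add_right)
      have "(a l \<bullet> y - b l) + lam * (a l \<bullet> d) \<le> 0" using lam0 by (intro conv_aux[OF A1 A2 _ lamcm]) simp
      then show "a l \<bullet> (y + lam *\<^sub>R d) \<le> b l" by (simp add: inner_add_right)
    qed
    moreover have "u l \<bullet> (y + lam *\<^sub>R d) + v l \<le> g y + lam * \<phi>" if l: "l \<in> J" for l
    proof -
      have A1: "u l \<bullet> y + v l - g y \<le> 0" using g_ge[OF l, of y] by simp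
      have A2: "(u l \<bullet> y + v l - g y) + cm * (u l \<bullet> d - \<phi>) \<le> 0" using cmJ l
        by (auto simp: inner_add_right algebra_simps)
      have "(u l \<bullet> y + v l - g y) + lam * (u l \<bullet> d - \<phi>) \<le> 0" using lam0 by (intro conv_aux[OF A1 A2 _ lamcm]) simp
      then show ?thesis by (simp add: inner_add_right algebra_simps)
    qed
    ultimately show ?thesis using Tmem lam0 by auto
  qed
  define yh where "yh = y + lam *\<^sub>R d"
  have yhD: "yh \<in> D" using lamT Tmem yh_def by auto
  have gyh: "g yh \<le> g y + lam * \<phi>"
    using lamT Tmem unfolding yh_def g_def[of "y + lam *\<^sub>R d"] using finJ Jne by (simp add: Max_le_iff)
  show ?thesis unfolding d_def[symmetric] yh_def[symmetric]
  proof (intro allI impI)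
    fix j assume ji: "j \<noteq> i"
    show "dderiv f yh i j > phiR f y"
    proof (rule ccontr)
      assume "\<not> dderiv f yh i j > phiR f y"
      then have le: "dderiv f yh i j \<le> ereal \<phi>" using phieq by simp
      define e2 where "e2 = unitv i - unitv j"
      have e2comp: "e2$x = (if x = i then 1 else 0) - (if x = j then 1 else 0)" for x
        unfolding e2_def by (simp add: unitv_comp)
      have e2C: "e2 \<in> Cx yh" and sv: "Mx yh e2 \<le> \<phi>"
        using le dderiv_eq[OF yhD, of i j] unfolding e2_def[symmetric] by (auto split: if_splits)
      obtain r2 where r2: "r2 > 0" and rr2: "\<And>w. norm w < r2 \<Longrightarrow> (yh + w \<in> D \<longleftrightarrow> w \<in> Cx yh) \<and> g (yh + w) = g yh + Mx yh w"
        using local[OF yhD] by blast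
      have ne1: "0 < norm e2 + 1" by (simp add: add_nonneg_pos)
      define \<epsilon> where "\<epsilon> = min (lam / 2) (r2 / (2 * (norm e2 + 1)))"
      have eps0: "\<epsilon> > 0" unfolding \<epsilon>_def using lam0 r2 ne1 by simp
      have epslam: "\<epsilon> < lam" unfolding \<epsilon>_def using lam0 by simp
      have "norm (\<epsilon> *\<^sub>R e2) = \<epsilon> * norm e2" using eps0 by simp
      also have "\<dots> \<le> (r2 / (2 * (norm e2 + 1))) * norm e2" unfolding \<epsilon>_def by (intro mult_right_mono) auto
      also have "\<dots> < r2"
      proof -
        have "r2 * norm e2 < r2 * (2 * (norm e2 + 1))" using r2 by (intro mult_strict_left_mono) (simp_all add: add_nonneg_pos)
        then show ?thesis using ne1 by (simp add: pos_divide_less_eq mult.commute)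
      qed
      finally have ne: "norm (\<epsilon> *\<^sub>R e2) < r2" .
      have eC: "\<epsilon> *\<^sub>R e2 \<in> Cx yh" using Cx_scale'[of \<epsilon> e2 yh] eps0 e2C by simp
      have yeD: "yh + \<epsilon> *\<^sub>R e2 \<in> D" and gye: "g (yh + \<epsilon> *\<^sub>R e2) = g yh + \<epsilon> * Mx yh e2"
        using rr2[OF ne] eC Mx_scale[of \<epsilon> yh e2] eps0 by auto
      define w where "w = lam *\<^sub>R d + \<epsilon> *\<^sub>R e2"
      have yw: "y + w = yh + \<epsilon> *\<^sub>R e2" unfolding w_def yh_def by (simp add: algebra_simps)
      have wC: "w \<in> Cx y" and lw: "g y + Mx y w \<le> g (y + w)" using lower[OF y, of w] yeD yw by auto
      have "\<epsilon> * Mx yh e2 \<le> \<epsilon> * \<phi>" using sv eps0 by (simp add: mult_left_mono)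
      then have Mw: "Mx y w \<le> lam * \<phi> + \<epsilon> * \<phi>" using lw yw gye gyh by simp
      have wcomp: "w$x = lam * ((if x = h then 1 else 0) - (if x = k then 1 else 0)) +
          \<epsilon> * ((if x = i then 1 else 0) - (if x = j then 1 else 0))" for x
        unfolding w_def using dcomp e2comp by simp
      have s0: "sum (\<lambda>x. w$x) UNIV = 0"
        unfolding wcomp by (simp add: sum.distrib sum_subtractf sum_distrib_left[symmetric] right_diff_distrib)
      have epsphi: "\<epsilon> * \<phi> < \<epsilon> * mr" using eps0 mr_gt by simp
      have epsphi0: "\<epsilon> * \<phi> < 0" using eps0 phin by (simp add: mult_pos_neg)
      have KA: "(\<Sum>x\<in>P. \<beta> x * w$x) \<le> Mx y w"
        if "P \<inter> M = {}" "\<And>x. x \<in> P \<Longrightarrow> 0 \<le> w$x" "\<And>x. x \<in> M \<Longrightarrow> w$x \<le> 0"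
          "\<And>x. x \<notin> P \<Longrightarrow> x \<notin> M \<Longrightarrow> w$x = 0"
          "sum (\<lambda>x. w$x) P - sum (\<lambda>x. w$x) M > 0" for P M
      proof -
        have bb: "\<beta> p \<le> Mx y (unitv p - unitv c)" if "p \<in> P" "c \<in> M" "unitv p - unitv c \<in> Cx y" for p c
        proof -
          have "p \<noteq> c" using that(1,2) \<open>P \<inter> M = {}\<close> by auto
          then show ?thesis using beta that(3) by blast
        qed
        show ?thesis by (rule key_apply[OF Mex y that(1) bb wC that(2,3,4) s0 that(5)])
      qed
      show False
      proof (cases "i = k")
        case False
        note ik = False
        show False
        proof (cases "j = h")
          case False
          have "(\<Sum>x\<in>{h,i}. \<beta> x * w$x) \<le> Mx y w"
            by (rule KA[of _ "{k,j}"]) (use hk ih ik ji False eps0 lam0 in \<open>auto simp: wcomp sum.insert_if\<close>)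
          then have "lam * \<phi> + \<epsilon> * mr \<le> Mx y w" using hk ih ik ji False by (simp add: wcomp \<beta>_def algebra_simps)
          then show False using Mw epsphi by linarith
        next
          case True
          have "(\<Sum>x\<in>{h,i}. \<beta> x * w$x) \<le> Mx y w"
            by (rule KA[of _ "{k}"]) (use hk ih ik ji True eps0 epslam lam0 in \<open>auto simp: wcomp sum.insert_if\<close>)
          then have "(lam - \<epsilon>) * \<phi> + \<epsilon> * mr \<le> Mx y w" using hk ih ik ji True by (simp add: wcomp \<beta>_def algebra_simps)
          then show False using Mw epsphi epsphi0 by (simp add: algebra_simps)
        qed
      next
        case True
        note ik = True
        show False
        proof (cases "j = h")
          case False
          have "(\<Sum>x\<in>{h}. \<beta> x * w$x) \<le> Mx y w"
            by (rule KA[of _ "{k,j}"]) (use hk ih ik ji False eps0 epslam lam0 in \<open>auto simp: wcomp sum.insert_if\<close>)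
          then have "lam * \<phi> \<le> Mx y w" using hk ih ik ji False by (simp add: wcomp \<beta>_def algebra_simps)
          then show False using Mw epsphi0 by linarith
        next
          case True
          have "(\<Sum>x\<in>{h}. \<beta> x * w$x) \<le> Mx y w"
            by (rule KA[of _ "{k}"]) (use hk ih ik ji True eps0 epslam lam0 in \<open>auto simp: wcomp sum.insert_if\<close>)
          then have "(lam - \<epsilon>) * \<phi> \<le> Mx y w" using hk ih ik ji True by (simp add: wcomp \<beta>_def algebra_simps)
          then show False using Mw epsphi0 by (simp add: algebra_simps)
        qed
      qed
    qed
  qed
qed

end

theorem mainTheorem16:
  fixes f :: "real^'n::finite \<Rightarrow> ereal" and y :: "real^'n" and i h k :: 'n and lam :: real
  assumes "M_convex f"
    and "bounded (domR f)"
    and "y \<in> domR f"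
    and "phiR f y < 0"
    and "\<forall>j. j \<noteq> i \<longrightarrow> dderiv f y i j > phiR f y"
    and "h \<noteq> k"
    and "dderiv f y h k = phiR f y"
    and "0 < lam" and "lam \<le> cbarR f y h k"
  shows "\<forall>j. j \<noteq> i \<longrightarrow> dderiv f (y + lam *\<^sub>R (unitv h - unitv k)) i j > phiR f y"
  proof -
  have pc: "polyhedral_convex f" and Mex: "\<forall>x\<in>domR f. \<forall>z\<in>domR f. \<forall>i. x$i > z$i \<longrightarrow> (\<exists>j. x$j < z$j \<and> (\<exists>\<epsilon>0>0. \<forall>\<epsilon>\<in>{0..\<epsilon>0}.
           f x + f z \<ge> f (x - \<epsilon> *\<^sub>R (unitv i - unitv j)) + f (z + \<epsilon> *\<^sub>R (unitv i - unitv j))))"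
    using assms(1) unfolding M_convex_def by auto
  from rep[OF pc] obtain J :: "(((real^'n) \<times> real) set) set" and u v and K :: "(((real^'n) \<times> real) set) set" and a b where
    H: "finite J" "J \<noteq> {}" "finite K"
       "\<forall>x. f x = (if (\<forall>l\<in>K. a l \<bullet> x \<le> b l) then ereal (Max ((\<lambda>l. u l \<bullet> x + v l) ` J)) else \<infinity>)"
    by (elim exE conjE) blast
  interpret prep f J u v K a b
    using H by unfold_locales auto
  show ?thesis by (rule main_loc[OF Mex assms(2-9)])
qed

end
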